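(* Let $\ell\in\mathbb{Z}_{\ge 2}$ and let $a_{n,m}$ and $b_{n,m}=b_{n,m}(\ell)$ be as in the context. Then $$\sum_{\substack{m\ge0,\ m\equiv \ell-2\bmod\ell\\ n\ge \ell-2}} b_{n,m}x^n \;=\; \frac{1+x\sum_{\substack{m\ge0,\ m\equiv \ell-1\bmod\ell\\ n\ge \ell-1}} a_{n,m}x^n}{x\,U_{\ell-1}\big(\tfrac{1}{2x}\big)}.$$
   Context: $U_j$ is the $j$th Chebyshev polynomial of the second kind: $U_0(x)=1$, $U_1(x)=2x$, $U_j(x)=2xU_{j-1}(x)-U_{j-2}(x)$. For $n,m\in\mathbb{Z}_{\ge 0}$, $a_{n,m}$ is the number of unit step paths $(x_0,\dots,x_n)$ on $\mathbb{Z}_{\ge0}$ (integers $x_i\ge0$, $|x_i-x_{i-1}|=1$) with $x_0=0$, $x_n=m$. For fixed $\ell\in\mathbb{Z}_{\ge2}$, $b_{n,m}=b_{n,m}(\ell)$ is defined by: $b_{n,m}=a_{n,m}$ if $m\equiv-1\pmod\ell$; $b_{n,m}=b_{n-1,m-1}+b_{n-1,m+1}$ if $m\equiv m_0\pmod\ell$ with $0\le m_0<\ell-2$; $b_{n,m}=b_{n-1,m-1}$ if $m\equiv-2\pmod\ell$; the recursion is used for $n\ge1$ with $b_{0,0}=1$, $b_{0,m}=0$ for $m>0$, and $b_{n,-1}=0$. The identity is one of formal Laurent series in $x$ (the right-hand side being expanded as a power series in $x$). *)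

theory Defs
  imports "HOL-Analysis.Analysis" "HOL-Computational_Algebra.Formal_Laurent_Series"
begin

fun chebU :: "nat \<Rightarrow> 'a::comm_ring_1 \<Rightarrow> 'a" where
  "chebU 0 y = 1"
| "chebU (Suc 0) y = 2 * y"
| "chebU (Suc (Suc j)) y = 2 * y * chebU (Suc j) y - chebU j y"

definition step_paths :: "nat \<Rightarrow> nat \<Rightarrow> nat list set" where
  "step_paths n m = {xs. length xs = Suc n \<and> xs ! 0 = 0 \<and> xs ! n = m \<and>
      (\<forall>i<n. \<bar>int (xs ! Suc i) - int (xs ! i)\<bar> = 1)}"

definition a_paths :: "nat \<Rightarrow> nat \<Rightarrow> nat" where
  "a_paths n m = card (step_paths n m)"

fun b_seq :: "nat \<Rightarrow> nat \<Rightarrow> nat \<Rightarrow> nat" where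
  "b_seq l 0 m = (if m = 0 then 1 else 0)"
| "b_seq l (Suc n) m =
     (if m mod l = l - 1 then a_paths (Suc n) m
      else if m mod l = l - 2 then (if m = 0 then 0 else b_seq l n (m - 1))
      else (if m = 0 then 0 else b_seq l n (m - 1)) + b_seq l n (m + 1))"

end

theory Submission
  imports Defs
begin


lemma a_paths_0: "m \<noteq> 0 \<Longrightarrow> a_paths 0 m = 0"
proof -
  assume "m \<noteq> 0"
  then have "step_paths 0 m = {}" unfolding step_paths_def by auto
  then show ?thesis by (simp add: a_paths_def)
qed

lemma step_paths_bound:
  assumes "xs \<in> step_paths n m" "i \<le> n" shows "xs ! i \<le> i"
  using assms(2)
proof (induction i)
  case 0 then show ?case using assms(1) by (simp add: step_paths_def)
next
  case (Suc i)
  then have "xs ! i \<le> i" by simp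
  moreover have "\<bar>int (xs ! Suc i) - int (xs ! i)\<bar> = 1" using assms(1) Suc.prems by (simp add: step_paths_def)
  ultimately show ?case by linarith
qed

lemma a_paths_big: "n < m \<Longrightarrow> a_paths n m = 0"
proof -
  assume "n < m"
  have "step_paths n m = {}"
  proof (rule ccontr)
    assume "step_paths n m \<noteq> {}"
    then obtain xs where xs: "xs \<in> step_paths n m" by blast
    then have "xs ! n \<le> n" using step_paths_bound by blast
    moreover have "xs ! n = m" using xs by (simp add: step_paths_def)
    ultimately show False using \<open>n < m\<close> by simp
  qed
  then show ?thesis by (simp add: a_paths_def)
qed

lemma b_big: "n < m \<Longrightarrow> b_seq l n m = 0"
proof (induction n arbitrary: m)
  case 0 then show ?case by simp
next
  case (Suc n)
  then show ?case using a_paths_big[OF Suc.prems] by auto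
qed

definition beta :: "nat \<Rightarrow> nat \<Rightarrow> real fps" where
  "beta l m = Abs_fps (\<lambda>n. real (b_seq l n m))"

lemma beta_R1:
  assumes "m mod l \<noteq> l - 1" "m mod l \<noteq> l - 2"
  shows "beta l m = (if m = 0 then fps_X * beta l (m+1) + 1 else fps_X * beta l (m - 1) + fps_X * beta l (m+1))"
proof (rule fps_ext)
  fix n show "beta l m $ n = (if m = 0 then fps_X * beta l (m+1) + 1 else fps_X * beta l (m - 1) + fps_X * beta l (m+1)) $ n"
    using assms by (cases n) (auto simp: beta_def)
qed

lemma beta_R2:
  assumes "m mod l = l - 2" "l \<ge> 2"
  shows "beta l m = (if m = 0 then 1 else fps_X * beta l (m - 1))"
proof (rule fps_ext)
  fix n show "beta l m $ n = (if m = 0 then 1 else fps_X * beta l (m - 1)) $ n"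
    using assms by (cases n) (auto simp: beta_def)
qed

lemma beta_R3:
  assumes "m mod l = l - 1" "l \<ge> 2"
  shows "beta l m = Abs_fps (\<lambda>n. real (a_paths n m))"
proof (rule fps_ext)
  have "m \<noteq> 0" proof
    assume "m = 0" then show False using assms by simp
  qed
  fix n show "beta l m $ n = Abs_fps (\<lambda>n. real (a_paths n m)) $ n"
    using assms \<open>m \<noteq> 0\<close> by (cases n) (auto simp: beta_def a_paths_0)
qed

fun qf :: "nat \<Rightarrow> real fps" where
  "qf 0 = 1" | "qf (Suc 0) = 1" | "qf (Suc (Suc i)) = qf (Suc i) - fps_X^2 * qf i"

lemma qf_0: "qf i $ 0 = 1"
  by (induction i rule: qf.induct) (auto simp: power2_eq_square)



lemma mod_block: "(j::nat) < l \<Longrightarrow> (k*l + j) mod l = j"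
  by simp

lemma T_lemma:
  "i \<le> d \<Longrightarrow> fps_X^i * beta (d+2) (k*(d+2) + (d-i)) = qf i * beta (d+2) (k*(d+2)+d)"
proof (induction i rule: nat_less_induct)
  case (1 i)
  let ?c = "beta (d+2) (k*(d+2)+d)"
  show ?case
  proof (cases i)
    case 0 then show ?thesis by simp
  next
    case (Suc j)
    show ?thesis
    proof (cases j)
      case 0
      then have i1: "i = 1" using Suc by simp
      have dpos: "d \<ge> 1" using 1 i1 by simp
      have "(k*(d+2)+d) mod (d+2) = (d+2) - 2" using mod_block[of d "d+2" k] by simp
      from beta_R2[OF this] have "?c = fps_X * beta (d+2) (k*(d+2)+d - 1)"
        using dpos by simp
      moreover have "k*(d+2)+d - 1 = k*(d+2) + (d-1)" using dpos by simp
      ultimately show ?thesis using i1 by simp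
    next
      case (Suc j')
      have i2: "i = Suc (Suc j')" using Suc \<open>i = Suc j\<close> by simp
      define p where "p = k*(d+2) + (d - Suc j')"
      have dl: "Suc (Suc j') \<le> d" using 1 i2 by simp
      have pm: "p mod (d+2) = d - Suc j'" unfolding p_def by (rule mod_block) simp
      have pne: "p \<noteq> 0" unfolding p_def using dl by linarith
      have "p mod (d+2) \<noteq> (d+2) - 1" "p mod (d+2) \<noteq> (d+2) - 2" using pm dl by simp_all
      from beta_R1[OF this] pne have R: "beta (d+2) p = fps_X * beta (d+2) (p - 1) + fps_X * beta (d+2) (p+1)"
        by simp
      have p1: "p - 1 = k*(d+2) + (d - i)" unfolding p_def using dl i2 by simp
      have p2: "p + 1 = k*(d+2) + (d - j')" unfolding p_def using dl by simp
      have IH1: "fps_X^(Suc j') * beta (d+2) p = qf (Suc j') * ?c"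
        using 1(1)[rule_format, of "Suc j'"] i2 dl unfolding p_def by simp
      have IH0: "fps_X^j' * beta (d+2) (p+1) = qf j' * ?c"
        using 1(1)[rule_format, of "j'"] i2 dl unfolding p2 by simp
      have "fps_X^(Suc j') * beta (d+2) p = fps_X^i * beta (d+2) (p - 1) + fps_X^2 * (fps_X^j' * beta (d+2) (p+1))"
        by (subst R) (simp add: i2 algebra_simps power2_eq_square)
      then have E2: "qf (Suc j') * ?c = fps_X^i * beta (d+2) (p - 1) + fps_X^2 * (qf j' * ?c)"
        unfolding IH1 IH0 .
      have "fps_X^i * beta (d+2) (p - 1) = qf (Suc j') * ?c - fps_X^2 * (qf j' * ?c)"
        unfolding E2 by simp
      then show ?thesis using p1 i2 by (simp add: algebra_simps)
    qed
  qed
qed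

lemma block_lemma:
  "beta (d+2) (k*(d+2)+d) * qf (d+1) = fps_X^d * (if k = 0 then 1 else fps_X * beta (d+2) (k*(d+2) - 1))"
proof (cases d)
  case 0
  have "(k*(d+2)+d) mod (d+2) = (d+2) - 2" using mod_block[of d "d+2" k] by simp
  from beta_R2[OF this] show ?thesis using 0 by auto
next
  case (Suc e)
  let ?c = "beta (d+2) (k*(d+2)+d)"
  have Td: "fps_X^d * beta (d+2) (k*(d+2)) = qf d * ?c" using T_lemma[of d d k] by simp
  have Te: "fps_X^e * beta (d+2) (k*(d+2) + 1) = qf e * ?c" using T_lemma[of e d k] Suc by simp
  have z: "(k*(d+2)) mod (d+2) = 0" by (rule mod_mult_self2_is_0)
  have "(k*(d+2)) mod (d+2) \<noteq> (d+2) - 1" "(k*(d+2)) mod (d+2) \<noteq> (d+2) - 2" unfolding z using Suc by simp_all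
  from beta_R1[OF this] have R: "beta (d+2) (k*(d+2)) = (if k = 0 then fps_X * beta (d+2) (k*(d+2)+1) + 1
     else fps_X * beta (d+2) (k*(d+2) - 1) + fps_X * beta (d+2) (k*(d+2)+1))" by simp
  have "qf d * ?c = fps_X^d * (if k = 0 then 1 else fps_X * beta (d+2) (k*(d+2) - 1)) + fps_X^2 * (fps_X^e * beta (d+2) (k*(d+2) + 1))"
    unfolding Td[symmetric] by (subst R) (auto simp: Suc algebra_simps power2_eq_square)
  then have "qf d * ?c - fps_X^2 * (qf e * ?c) = fps_X^d * (if k = 0 then 1 else fps_X * beta (d+2) (k*(d+2) - 1))"
    using Te by simp
  then show ?thesis using Suc by (simp add: algebra_simps)
qed



lemma infsum_block:
  fixes f :: "nat \<Rightarrow> real"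
  assumes "j < l" "\<And>m. n < m \<Longrightarrow> f m = 0" "n < N"
  shows "infsum f {m. m mod l = j} = (\<Sum>k<N. f (k*l+j))"
proof -
  let ?h = "\<lambda>k. k*l+j"
  have l0: "l > 0" using assms(1) by simp
  have "infsum f {m. m mod l = j} = infsum f (?h ` {..<N})"
  proof (rule infsum_cong_neutral)
    fix x assume "x \<in> ?h ` {..<N} - {m. m mod l = j}"
    then show "f x = 0" using assms(1) mod_block by auto
  next
    fix x assume x: "x \<in> {m. m mod l = j} - ?h ` {..<N}"
    then have xm: "x mod l = j" by simp
    have xe: "x = (x div l) * l + j" using xm by (metis div_mult_mod_eq)
    have "\<not> x div l < N"
    proof
      assume "x div l < N"
      then have "x \<in> ?h ` {..<N}" using xe by blast
      then show False using x by blast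
    qed
    then have "x div l * l \<ge> N * l" by simp
    moreover have "N * l \<ge> N" using l0 by simp
    ultimately have "x > n" using xe assms(3) by linarith
    then show "f x = 0" using assms(2) by blast
  qed simp
  also have "\<dots> = sum f (?h ` {..<N})" by simp
  also have "\<dots> = (\<Sum>k<N. f (k*l+j))"
  proof (rule sum.reindex_cong[where l = ?h])
    show "inj_on ?h {..<N}" using l0 by (auto simp: inj_on_def)
  qed auto
  finally show ?thesis .
qed

lemma coeff_cong:
  fixes f g h :: "'a::comm_ring_1 fps"
  assumes "\<And>i. i \<le> n \<Longrightarrow> f $ i = g $ i"
  shows "(h * f) $ n = (h * g) $ n"
  unfolding fps_mult_nth using assms by (intro sum.cong) auto

lemma cheb_lemma:
  "fls_X^j * chebU j (inverse (2 * fls_X)) = fps_to_fls (qf j)"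
proof (induction j rule: qf.induct)
  case 1 then show ?case by simp
next
  case 2
  have nz: "2 * fls_X \<noteq> (0::real fls)" by simp
  have "fls_X * (2 * inverse (2 * fls_X)) = (2 * fls_X) * inverse (2 * fls_X :: real fls)"
    by (simp only: mult_ac)
  also have "\<dots> = 1" by (rule right_inverse[OF nz])
  finally show ?case by simp
next
  case (3 i)
  let ?y = "inverse (2 * fls_X) :: real fls"
  have nz: "2 * fls_X \<noteq> (0::real fls)" by simp
  have "2 * ?y * fls_X = (2 * fls_X) * ?y"
    by (simp only: mult_ac)
  also have "\<dots> = 1" by (rule right_inverse[OF nz])
  finally have y: "2 * ?y * fls_X = 1" .
  have "fls_X^(Suc (Suc i)) * chebU (Suc (Suc i)) ?y
     = (2 * ?y * fls_X) * (fls_X^(Suc i) * chebU (Suc i) ?y) - fls_X^2 * (fls_X^i * chebU i ?y)"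
    by (simp add: algebra_simps power2_eq_square)
  also have "\<dots> = fps_to_fls (qf (Suc i)) - fls_X^2 * fps_to_fls (qf i)"
    unfolding y 3 by simp
  also have "\<dots> = fps_to_fls (qf (Suc (Suc i)))"
    by (simp add: fls_times_fps_to_fls fps_to_fls_power)
  finally show ?case .
qed



lemma fps_main:
  fixes d :: nat
  defines "l \<equiv> d + 2"
  defines "Bf \<equiv> Abs_fps (\<lambda>n. if n \<ge> d
            then (\<Sum>\<^sub>\<infinity>m\<in>{m. m mod l = d}. real (b_seq l n m)) else 0)"
  defines "Af \<equiv> Abs_fps (\<lambda>n. if n \<ge> Suc d
            then (\<Sum>\<^sub>\<infinity>m\<in>{m. m mod l = Suc d}. real (a_paths n m)) else 0)"
  shows "Bf * qf (d+1) = fps_X^d * (1 + fps_X * Af)"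
proof (rule fps_ext)
  fix n
  have truncB: "Bf $ i = (\<Sum>k<N. real (b_seq l i (k*l+d)))" if "i < N" for i N
  proof -
    have inf: "(\<Sum>\<^sub>\<infinity>m\<in>{m. m mod l = d}. real (b_seq l i m)) = (\<Sum>k<N. real (b_seq l i (k*l+d)))"
      by (rule infsum_block) (use that b_big in \<open>auto simp: l_def\<close>)
    have "(\<Sum>k<N. real (b_seq l i (k*l+d))) = 0" if "i < d"
      using b_big[of i] that by (intro sum.neutral) auto
    then show ?thesis unfolding Bf_def using inf by auto
  qed
  have truncA: "Af $ i = (\<Sum>k<N. real (a_paths i (k*l+Suc d)))" if "i < N" for i N
  proof -
    have inf: "(\<Sum>\<^sub>\<infinity>m\<in>{m. m mod l = Suc d}. real (a_paths i m)) = (\<Sum>k<N. real (a_paths i (k*l+Suc d)))"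
      by (rule infsum_block) (use that a_paths_big in \<open>auto simp: l_def\<close>)
    have "(\<Sum>k<N. real (a_paths i (k*l+Suc d))) = 0" if "i < Suc d"
      using a_paths_big[of i] that by (intro sum.neutral) auto
    then show ?thesis unfolding Af_def using inf by auto
  qed
  define S where "S = (\<Sum>k<Suc n. beta l (k*l+d))"
  define Sa where "Sa = (\<Sum>k<n. Abs_fps (\<lambda>i. real (a_paths i (k*l+Suc d))))"
  have "(Bf * qf (d+1)) $ n = (qf (d+1) * Bf) $ n" by (simp add: mult.commute)
  also have "\<dots> = (qf (d+1) * S) $ n"
  proof (rule coeff_cong)
    fix i assume "i \<le> n"
    then show "Bf $ i = S $ i" unfolding S_def using truncB[of i "Suc n"]
      by (simp add: fps_sum_nth beta_def)
  qed
  also have "\<dots> = (S * qf (d+1)) $ n" by (simp add: mult.commute)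
  also have "S * qf (d+1) = (\<Sum>k<Suc n. fps_X^d * (if k = 0 then 1 else fps_X * beta l (k*l - 1)))"
    unfolding S_def sum_distrib_right l_def by (intro sum.cong refl) (rule block_lemma)
  also have "\<dots> = fps_X^d * (1 + fps_X * Sa)"
  proof -
    have "\<And>k. beta l (Suc k * l - 1) = Abs_fps (\<lambda>i. real (a_paths i (k*l+Suc d)))"
    proof -
      fix k
      have e: "Suc k * l - 1 = k*l + Suc d" by (simp add: l_def)
      have "(k*l + Suc d) mod l = l - 1" using mod_block[of "Suc d" l k] by (simp add: l_def)
      then show "beta l (Suc k * l - 1) = Abs_fps (\<lambda>i. real (a_paths i (k*l+Suc d)))"
        unfolding e by (rule beta_R3) (simp add: l_def)
    qed
    then show ?thesis
      unfolding sum.lessThan_Suc_shift Sa_def by (simp add: sum_distrib_left algebra_simps)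
  qed
  also have "(fps_X^d * (1 + fps_X * Sa)) $ n = (fps_X^d * (1 + fps_X * Af)) $ n"
  proof (rule coeff_cong)
    fix i assume i: "i \<le> n"
    show "(1 + fps_X * Sa) $ i = (1 + fps_X * Af) $ i"
    proof (cases i)
      case (Suc i')
      then have "Af $ i' = Sa $ i'" using truncA[of i' n] i
        by (simp add: Sa_def fps_sum_nth)
      then show ?thesis using Suc by simp
    qed simp
  qed
  finally show "(Bf * qf (d+1)) $ n = (fps_X^d * (1 + fps_X * Af)) $ n" .
qed



theorem lemma2p10:
  fixes l :: nat
  assumes "l \<ge> 2"
  shows "fps_to_fls (Abs_fps (\<lambda>n. if n \<ge> l - 2
            then (\<Sum>\<^sub>\<infinity>m\<in>{m. m mod l = l - 2}. real (b_seq l n m)) else 0))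
       = (1 + fls_X * fps_to_fls (Abs_fps (\<lambda>n. if n \<ge> l - 1
            then (\<Sum>\<^sub>\<infinity>m\<in>{m. m mod l = l - 1}. real (a_paths n m)) else 0)))
         / (fls_X * chebU (l - 1) (inverse (2 * fls_X)))"
proof -
  obtain d where l: "l = d + 2" using assms by (metis add.commute le_Suc_ex)
  have l2: "l - 2 = d" and l1: "l - 1 = Suc d" using l by simp_all
  define Bf where "Bf \<equiv> Abs_fps (\<lambda>n. if n \<ge> d
            then (\<Sum>\<^sub>\<infinity>m\<in>{m. m mod l = d}. real (b_seq l n m)) else 0)"
  define Af where "Af \<equiv> Abs_fps (\<lambda>n. if n \<ge> Suc d
            then (\<Sum>\<^sub>\<infinity>m\<in>{m. m mod l = Suc d}. real (a_paths n m)) else 0)"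
  have F: "Bf * qf (d+1) = fps_X^d * (1 + fps_X * Af)"
    unfolding Bf_def Af_def l by (rule fps_main)
  let ?U = "chebU (Suc d) (inverse (2 * fls_X)) :: real fls"
  have C: "fls_X^(Suc d) * ?U = fps_to_fls (qf (d+1))" using cheb_lemma[of "Suc d"] by simp
  have Qnz: "qf (d+1) \<noteq> 0"
  proof
    assume "qf (d+1) = 0"
    then have "qf (d+1) $ 0 = 0" by simp
    then show False using qf_0 by simp
  qed
  have F': "fps_to_fls Bf * fps_to_fls (qf (d+1)) = fls_X^d * (1 + fls_X * fps_to_fls Af)"
    using arg_cong[OF F, of fps_to_fls] by (simp add: fls_times_fps_to_fls fps_to_fls_power)
  have "fls_X^d * (fps_to_fls Bf * (fls_X * ?U)) = fls_X^d * (1 + fls_X * fps_to_fls Af)"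
    using F' unfolding C[symmetric] by (simp add: algebra_simps)
  then have E: "fps_to_fls Bf * (fls_X * ?U) = 1 + fls_X * fps_to_fls Af"
    by simp
  have nz: "fls_X * ?U \<noteq> 0"
  proof
    assume "fls_X * ?U = 0"
    then have "fls_X^(Suc d) * ?U = 0" by simp
    then show False using C Qnz by simp
  qed
  have "fps_to_fls Bf = (1 + fls_X * fps_to_fls Af) / (fls_X * ?U)"
    using E nz by (simp add: eq_divide_eq)
  then show ?thesis unfolding l2 l1 Bf_def Af_def .
qed


end
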